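(* Let $s$ be a positive integer and let $a_0\ge a_1\ge\cdots\ge a_t\ge1$ be integers with $\sum_{i=0}^t a_i=s^2$. Let $$g=2\sum_{i=0}^t\sqrt{a_i}-2s.$$ Then $g\ge 2t\big(1-\frac1s\big)$. Moreover, if $a_0\ge a_1\ge 36$, then $g\ge 2t\big(1-\frac1s\big)+4$. *)

theory Defs
  imports Complex_Main
begin

end

theory Submission
  imports Defs
begin

lemma key_ineq:
  fixes x y s :: real
  assumes "x \<ge> 6" "y \<ge> 6" "x^2 + y^2 \<le> s^2" "s \<ge> 0"
  shows "(s+1)*(x+y) - x^2 - y^2 \<ge> 4*s+2"
proof -
  have x36: "x^2 \<ge> 36" using assms(1) power_mono[of 6 x 2] by simp
  have y36: "y^2 \<ge> 36" using assms(2) power_mono[of 6 y 2] by simp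
  have s8: "s > 8"
  proof (rule ccontr)
    assume "\<not> s > 8"
    hence "s^2 \<le> 8^2" using assms(4) power_mono[of s 8 2] by simp
    thus False using assms(3) x36 y36 by simp
  qed
  show ?thesis
  proof (cases "x + y \<ge> s + 3")
    case True
    have "(s+1)*(x+y) \<ge> (s+1)*(s+3)" using True s8 by (intro mult_left_mono) auto
    moreover have "(s+1)*(s+3) = s^2 + 4*s + 3" by (simp add: power2_eq_square algebra_simps)
    ultimately show ?thesis using assms(3) by linarith
  next
    case False
    have p: "(x-6)*(y-6) \<ge> 0" using assms by simp
    have q: "(x+y-12)*(s+3-(x+y)) \<ge> 0" using False assms by simp
    have pe: "(x-6)*(y-6) = x*y - 6*x - 6*y + 36" by (simp add: algebra_simps)
    have qe: "(x+y-12)*(s+3-(x+y)) = s*x + s*y + 15*x + 15*y - x*x - 2*(x*y) - y*y - 12*s - 36"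
      by (simp add: algebra_simps)
    have ge: "(s+1)*(x+y) - x^2 - y^2 = s*x + s*y + x + y - x*x - y*y"
      by (simp add: power2_eq_square algebra_simps)
    show ?thesis using p q pe qe ge False s8 by linarith
  qed
qed

theorem lemma4p3:
  fixes s t :: nat and a :: "nat \<Rightarrow> nat"
  assumes s_pos: "s > 0"
    and mono: "\<And>i. i < t \<Longrightarrow> a i \<ge> a (Suc i)"
    and pos: "\<And>i. i \<le> t \<Longrightarrow> a i \<ge> 1"
    and sum_eq: "(\<Sum>i\<le>t. a i) = s ^ 2"
  shows "2 * (\<Sum>i\<le>t. sqrt (real (a i))) - 2 * real s \<ge> 2 * real t * (1 - 1 / real s)
         \<and> (t \<ge> 1 \<longrightarrow> a 0 \<ge> a 1 \<longrightarrow> a 1 \<ge> 36 \<longrightarrow>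
         2 * (\<Sum>i\<le>t. sqrt (real (a i))) - 2 * real s \<ge> 2 * real t * (1 - 1 / real s) + 4)"
proof -
  define x where "x i = sqrt (real (a i))" for i
  define S where "S = real s"
  define X where "X = (\<Sum>i\<le>t. x i)"
  define D where "D i = (S+1) * x i - S - real (a i)" for i
  have Spos: "S \<ge> 1" using s_pos by (simp add: S_def)
  have sumA: "(\<Sum>i\<le>t. real (a i)) = S^2"
  proof -
    have "real (\<Sum>i\<le>t. a i) = real (s^2)" using sum_eq by simp
    thus ?thesis unfolding S_def by simp
  qed
  have ale: "a i \<le> s^2" if "i \<le> t" for i
  proof -
    have "a i \<le> (\<Sum>i\<le>t. a i)" using that by (intro member_le_sum) auto
    thus ?thesis using sum_eq by simp
  qed
  have xsq: "(x i)^2 = real (a i)" for i by (simp add: x_def)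
  have x1: "x i \<ge> 1" if "i \<le> t" for i using pos[OF that] by (simp add: x_def)
  have xs: "x i \<le> S" if "i \<le> t" for i
  proof -
    have "real (a i) \<le> real (s^2)" using ale[OF that] by (simp only: of_nat_le_iff)
    hence "real (a i) \<le> S^2" unfolding S_def by simp
    hence "sqrt (real (a i)) \<le> sqrt (S^2)" by (rule real_sqrt_le_mono)
    thus ?thesis using Spos by (simp add: x_def)
  qed
  have Dnn: "D i \<ge> 0" if "i \<le> t" for i
  proof -
    have "(x i - 1) * (S - x i) \<ge> 0" using x1[OF that] xs[OF that] by simp
    moreover have "(x i - 1) * (S - x i) = (S+1) * x i - S - (x i)^2" by (simp add: power2_eq_square algebra_simps)
    ultimately show ?thesis unfolding D_def xsq[symmetric] by linarith
  qed
  have sumD: "(\<Sum>i\<le>t. D i) = (S+1) * X - (real t + 1) * S - S^2"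
  proof -
    have "(\<Sum>i\<le>t. D i) = (\<Sum>i\<le>t. (S+1) * x i) - (\<Sum>i\<le>t. S) - (\<Sum>i\<le>t. real (a i))"
      unfolding D_def by (simp add: sum_subtractf)
    also have "\<dots> = (S+1) * X - (real t + 1) * S - S^2"
      unfolding X_def sumA by (simp add: sum_distrib_left)
    finally show ?thesis .
  qed
  have part1: "X - S \<ge> real t * (1 - 1 / S)"
  proof -
    have "(\<Sum>i\<le>t. D i) \<ge> 0" by (intro sum_nonneg) (simp add: Dnn)
    hence "(S+1) * X - (real t + 1) * S - S^2 \<ge> 0" using sumD by linarith
    moreover have "(S+1) * (X - S) = (S+1) * X - S*S - S" by (simp add: algebra_simps)
    moreover have "(real t + 1) * S = real t * S + S" by (simp add: algebra_simps)
    moreover have "S^2 = S*S" by (simp add: power2_eq_square)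
    ultimately have h: "(S+1) * (X - S) \<ge> real t * S" by linarith
    have "real t * (1 - 1/S) * (S+1) \<le> real t * S"
    proof -
      have "(1 - 1/S) * (S+1) = S - 1/S" using Spos by (simp add: field_simps)
      have "real t * (1 - 1/S) * (S+1) = real t * ((1 - 1/S) * (S+1))" by (simp only: mult.assoc)
      also have "\<dots> = real t * (S - 1/S)" using \<open>(1 - 1/S) * (S+1) = S - 1/S\<close> by simp
      also have "\<dots> = real t * S - real t / S" by (simp add: right_diff_distrib)
      finally have "real t * (1 - 1/S) * (S+1) = real t * S - real t / S" .
      also have "\<dots> \<le> real t * S" using Spos by simp
      finally show ?thesis .
    qed
    moreover have "(X - S) * (S+1) = (S+1) * (X - S)" by (rule mult.commute)
    ultimately have m: "real t * (1 - 1/S) * (S+1) \<le> (X - S) * (S+1)" using h by linarith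
    have "0 < S + 1" using Spos by simp
    from mult_right_le_imp_le[OF m this] show ?thesis .
  qed
  have part2: "X - S \<ge> real t * (1 - 1 / S) + 2"
    if t1: "t \<ge> 1" and a01: "a 0 \<ge> a 1" and a1: "a 1 \<ge> 36"
  proof -
    have split: "{..t} = insert 0 (insert 1 {2..t})" using t1 by auto
    have "(\<Sum>i\<le>t. D i) = D 0 + D 1 + (\<Sum>i\<in>{2..t}. D i)" unfolding split by simp
    moreover have "(\<Sum>i\<in>{2..t}. D i) \<ge> 0" using Dnn by (intro sum_nonneg) auto
    ultimately have h1: "(S+1) * X - (real t + 1) * S - S^2 \<ge> D 0 + D 1" using sumD by linarith
    have x06: "x 0 \<ge> 6" and x16: "x 1 \<ge> 6"
    proof -
      have r1: "(36::real) \<le> real (a 1)" using a1 by simp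
      have r0: "(36::real) \<le> real (a 0)" using a01 a1 by simp
      have "sqrt 36 \<le> sqrt (real (a 1))" "sqrt 36 \<le> sqrt (real (a 0))"
        using real_sqrt_le_mono[OF r1] real_sqrt_le_mono[OF r0] by auto
      moreover have "sqrt (36::real) = 6" by (simp add: real_sqrt_eq_iff)
      ultimately show "x 0 \<ge> 6" "x 1 \<ge> 6" by (simp_all add: x_def)
    qed
    have qle: "(x 0)^2 + (x 1)^2 \<le> S^2"
    proof -
      have "(\<Sum>i\<le>t. real (a i)) = real (a 0) + real (a 1) + (\<Sum>i\<in>{2..t}. real (a i))"
        unfolding split by simp
      moreover have "(\<Sum>i\<in>{2..t}. real (a i)) \<ge> 0" by (intro sum_nonneg) auto
      ultimately show ?thesis using sumA xsq by simp
    qed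
    have k: "(S+1)*(x 0 + x 1) - (x 0)^2 - (x 1)^2 \<ge> 4*S+2"
      using key_ineq[OF x06 x16 qle] Spos by simp
    have e1: "(S+1) * (X - S - 2) = (S+1) * X - S^2 - 3*S - 2" by (simp add: power2_eq_square algebra_simps)
    have e2: "(real t + 1) * S = real t * S + S" by (simp add: algebra_simps)
    have e3: "(S+1)*(x 0 + x 1) = (S+1) * x 0 + (S+1) * x 1" by (simp add: algebra_simps)
    have h: "(S+1) * (X - S - 2) \<ge> real t * S"
      using h1 k e1 e2 e3 unfolding D_def xsq[symmetric] by linarith
    have "real t * (1 - 1/S) * (S+1) \<le> real t * S"
    proof -
      have "(1 - 1/S) * (S+1) = S - 1/S" using Spos by (simp add: field_simps)
      have "real t * (1 - 1/S) * (S+1) = real t * ((1 - 1/S) * (S+1))" by (simp only: mult.assoc)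
      also have "\<dots> = real t * (S - 1/S)" using \<open>(1 - 1/S) * (S+1) = S - 1/S\<close> by simp
      also have "\<dots> = real t * S - real t / S" by (simp add: right_diff_distrib)
      finally have "real t * (1 - 1/S) * (S+1) = real t * S - real t / S" .
      also have "\<dots> \<le> real t * S" using Spos by simp
      finally show ?thesis .
    qed
    moreover have "(X - S - 2) * (S+1) = (S+1) * (X - S - 2)" by (rule mult.commute)
    ultimately have m: "real t * (1 - 1/S) * (S+1) \<le> (X - S - 2) * (S+1)" using h by linarith
    have "0 < S + 1" using Spos by simp
    from mult_right_le_imp_le[OF m this] have "real t * (1 - 1/S) \<le> X - S - 2" .
    thus ?thesis by simp
  qed
  have G1: "2 * X - 2 * S \<ge> 2 * real t * (1 - 1 / S)" using part1 by linarith
  have G2: "t \<ge> 1 \<longrightarrow> a 0 \<ge> a 1 \<longrightarrow> a 1 \<ge> 36 \<longrightarrow>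
         2 * X - 2 * S \<ge> 2 * real t * (1 - 1 / S) + 4"
  proof (intro impI)
    assume "t \<ge> 1" "a 0 \<ge> a 1" "a 1 \<ge> 36"
    from part2[OF this] show "2 * X - 2 * S \<ge> 2 * real t * (1 - 1 / S) + 4" by linarith
  qed
  from G1 G2 show ?thesis unfolding X_def x_def S_def by blast
qed

end
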